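(* For all integers $n\geq 0$, $$p_o(n)+\sum_{j\geq1}(-1)^j\left(p_o(n-j(3j-2))+p_o(n-j(3j+2))\right)=\begin{cases}1,&\text{if $n=3t$ for some triangular number $t$},\\0,&\text{otherwise,}\end{cases}$$ i.e. $p_o(n)-p_o(n-1)-p_o(n-5)+p_o(n-8)+p_o(n-16)-\cdots$ equals $1$ if $n$ is three times a triangular number and $0$ otherwise.
   Context: $p_o(n)$ is the number of partitions of $n$ into odd parts, with $p_o(0)=1$ and $p_o(m)=0$ for $m<0$. A triangular number is an integer of the form $k(k+1)/2$ with $k\ge 0$. *)

theory Defs
  imports Main "HOL-Library.Multiset"
begin

text \<open>Number of partitions of m into odd parts (a partition is a multiset of
  positive integers; odd naturals are automatically positive). Zero for m < 0.\<close>
definition p_o :: "int \<Rightarrow> nat" where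
  "p_o m = (if m < 0 then 0 else
     card {P :: nat multiset. (\<forall>x\<in>#P. odd x) \<and> sum_mset P = nat m})"

definition triangular :: "nat \<Rightarrow> bool" where
  "triangular t \<longleftrightarrow> (\<exists>k::nat. t = k * (k + 1) div 2)"

end

theory Submission
  imports Defs "HOL-Computational_Algebra.Formal_Power_Series"
begin

definition cnt :: "nat set \<Rightarrow> nat \<Rightarrow> nat" where
  "cnt S m = card {P. set_mset P \<subseteq> S \<and> sum_mset P = m}"

lemma size_le_sum_mset: "0 \<notin># P \<Longrightarrow> size P \<le> sum_mset (P :: nat multiset)"
  by (induction P) auto

lemma fin_parts:
  assumes "finite S" "0 \<notin> S"
  shows "finite {P. set_mset P \<subseteq> S \<and> sum_mset P = (m::nat)}"
proof (rule finite_subset)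
  show "{P. set_mset P \<subseteq> S \<and> sum_mset P = m} \<subseteq> (\<Union>k\<le>m. multisets_of_size S k)"
  proof
    fix P assume "P \<in> {P. set_mset P \<subseteq> S \<and> sum_mset P = m}"
    hence "set_mset P \<subseteq> S" "sum_mset P = m" by auto
    moreover have "size P \<le> sum_mset P" using \<open>set_mset P \<subseteq> S\<close> assms(2)
      by (intro size_le_sum_mset) auto
    ultimately show "P \<in> (\<Union>k\<le>m. multisets_of_size S k)"
      by (auto simp: multisets_of_size_def)
  qed
  show "finite (\<Union>k\<le>m. multisets_of_size S k)" using assms by auto
qed

lemma cnt_insert:
  assumes "finite S" "0 \<notin> S" "a \<notin> S" "a > 0"
  shows "cnt (insert a S) m = cnt S m + (if a \<le> m then cnt (insert a S) (m - a) else 0)"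
proof -
  let ?A = "{P. set_mset P \<subseteq> insert a S \<and> sum_mset P = m}"
  let ?B = "{P. set_mset P \<subseteq> S \<and> sum_mset P = m}"
  let ?C = "{P. set_mset P \<subseteq> insert a S \<and> sum_mset P = m \<and> a \<in># P}"
  have fA: "finite ?A" using assms by (intro fin_parts) auto
  have AB: "?A = ?B \<union> ?C" by auto
  have dis: "?B \<inter> ?C = {}" using assms(3) by auto
  have cA: "card ?A = card ?B + card ?C"
    using AB dis fA by (metis (no_types, lifting) card_Un_disjoint finite_Un)
  have cC: "card ?C = (if a \<le> m then cnt (insert a S) (m - a) else 0)"
  proof (cases "a \<le> m")
    case True
    let ?D = "{P. set_mset P \<subseteq> insert a S \<and> sum_mset P = m - a}"
    have "?C = (\<lambda>P. P + {#a#}) ` ?D"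
    proof
      show "?C \<subseteq> (\<lambda>P. P + {#a#}) ` ?D"
      proof
        fix P assume P: "P \<in> ?C"
        hence "P = (P - {#a#}) + {#a#}" by auto
        moreover have "P - {#a#} \<in> ?D"
        proof -
          have "sum_mset (P - {#a#}) + a = sum_mset P" using P
            by (metis (no_types, lifting) mem_Collect_eq sum_mset.remove add.commute)
          thus ?thesis using P by (auto dest: in_diffD)
        qed
        ultimately show "P \<in> (\<lambda>P. P + {#a#}) ` ?D" by blast
      qed
      show "(\<lambda>P. P + {#a#}) ` ?D \<subseteq> ?C" using True by auto
    qed
    moreover have "inj_on (\<lambda>P. P + {#a#}) ?D" by (auto simp: inj_on_def)
    ultimately show ?thesis using True by (simp add: card_image cnt_def)
  next
    case False
    have e: "?C = {}"
    proof (rule ccontr)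
      assume "?C \<noteq> {}"
      then obtain P where P: "P \<in> ?C" by blast
      hence "a \<le> sum_mset P"
        by (metis (no_types, lifting) le_add1 mem_Collect_eq sum_mset.remove)
      thus False using P False by auto
    qed
    have "card ?C = 0" by (simp only: e card.empty)
    thus ?thesis using False by simp
  qed
  show ?thesis using cA cC by (simp add: cnt_def)
qed

definition Cgf :: "nat set \<Rightarrow> int fps" where
  "Cgf S = Abs_fps (\<lambda>m. int (cnt S m))"

lemma Cgf_empty: "Cgf {} = 1"
proof -
  have "cnt {} m = (if m = 0 then 1 else 0)" for m
  proof -
    have "{P :: nat multiset. set_mset P \<subseteq> {} \<and> sum_mset P = m} = (if m = 0 then {{#}} else {})"
      by auto
    thus ?thesis by (simp add: cnt_def)
  qed
  thus ?thesis by (auto simp: Cgf_def fps_eq_iff)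
qed

lemma Cgf_insert:
  assumes "finite S" "0 \<notin> S" "a \<notin> S" "a > 0"
  shows "Cgf (insert a S) * (1 - fps_X ^ a) = Cgf S"
proof -
  have "fps_nth (Cgf (insert a S) * (1 - fps_X ^ a)) m = fps_nth (Cgf S) m" for m
  proof -
    have "fps_nth (Cgf (insert a S) * (1 - fps_X ^ a)) m
          = fps_nth (Cgf (insert a S)) m - fps_nth (Cgf (insert a S) * fps_X ^ a) m"
      by (simp add: algebra_simps)
    also have "\<dots> = fps_nth (Cgf S) m"
      using cnt_insert[OF assms, of m]
      by (auto simp: fps_X_power_mult_right_nth Cgf_def)
    finally show ?thesis .
  qed
  thus ?thesis by (simp add: fps_eq_iff)
qed

lemma Cgf_prod:
  assumes "finite S" "0 \<notin> S"
  shows "Cgf S * (\<Prod>k\<in>S. (1 - fps_X ^ k)) = 1"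
  using assms
proof (induction S rule: finite_induct)
  case empty
  then show ?case by (simp add: Cgf_empty)
next
  case (insert a S)
  have "Cgf (insert a S) * (\<Prod>k\<in>insert a S. (1 - fps_X ^ k))
      = (Cgf (insert a S) * (1 - fps_X ^ a)) * (\<Prod>k\<in>S. (1 - fps_X ^ k))"
    using insert by (simp add: mult.assoc)
  also have "\<dots> = 1" using insert by (simp add: Cgf_insert)
  finally show ?case .
qed

definition PO :: "int fps" where
  "PO = Abs_fps (\<lambda>m. int (p_o (int m)))"

lemma p_o_cnt:
  assumes "m \<le> M"
  shows "p_o (int m) = cnt {k. odd k \<and> k \<le> M} m"
proof -
  have "{P :: nat multiset. (\<forall>x\<in>#P. odd x) \<and> sum_mset P = m}
       = {P. set_mset P \<subseteq> {k. odd k \<and> k \<le> M} \<and> sum_mset P = m}"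
  proof -
    have "x \<le> sum_mset P" if "x \<in># P" for x and P :: "nat multiset"
      using that by (metis le_add1 sum_mset.remove)
    thus ?thesis using assms by fastforce
  qed
  thus ?thesis by (simp add: p_o_def cnt_def)
qed

fun gb :: "'a::comm_ring_1 \<Rightarrow> nat \<Rightarrow> nat \<Rightarrow> 'a" where
  "gb Q 0 k = (if k = 0 then 1 else 0)"
| "gb Q (Suc n) 0 = 1"
| "gb Q (Suc n) (Suc k) = gb Q n (Suc k) + Q ^ (n - k) * gb Q n k"

lemma gb_gt: "n < k \<Longrightarrow> gb Q n k = 0"
proof (induction n arbitrary: k)
  case 0 thus ?case by simp
next
  case (Suc n)
  then obtain k' where "k = Suc k'" by (cases k) auto
  thus ?case using Suc by simp
qed

lemma gb_0 [simp]: "gb Q n 0 = 1"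
  by (cases n) auto

lemma tri_Suc: "Suc m * m div 2 = m * (m - 1) div 2 + m"
proof (cases m)
  case 0 thus ?thesis by simp
next
  case (Suc j)
  have "Suc m * m = m * (m - 1) + 2 * m" using Suc by (simp add: algebra_simps)
  thus ?thesis by simp
qed

lemma qbin:
  fixes x y Q :: "'a::comm_ring_1"
  shows "(\<Prod>k<n. (x + y * Q ^ k)) = (\<Sum>m\<le>n. gb Q n m * Q ^ (m * (m - 1) div 2) * y ^ m * x ^ (n - m))"
proof (induction n)
  case 0 thus ?case by simp
next
  case (Suc n)
  define R where "R = (\<Sum>m\<le>n. gb Q n m * Q ^ (m * (m - 1) div 2) * y ^ m * x ^ (n - m))"
  define g where "g m = gb Q n m * Q ^ (m * (m - 1) div 2) * y ^ m * x ^ (Suc n - m)" for m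
  have xR: "x * R = (\<Sum>m\<le>Suc n. g m)"
  proof -
    have "(\<Sum>m\<le>Suc n. g m) = (\<Sum>m\<le>n. g m)" by (simp add: g_def gb_gt)
    also have "\<dots> = x * R" unfolding R_def g_def sum_distrib_left
      by (intro sum.cong refl) (simp add: Suc_diff_le algebra_simps)
    finally show ?thesis by simp
  qed
  have xR2: "x * R = x ^ Suc n + (\<Sum>m\<le>n. gb Q n (Suc m) * Q ^ (Suc m * m div 2) * y ^ Suc m * x ^ (n - m))"
    unfolding xR sum.atMost_Suc_shift by (simp add: g_def)
  have yR: "y * Q ^ n * R = (\<Sum>m\<le>n. Q ^ (n - m) * gb Q n m * Q ^ (Suc m * m div 2) * y ^ Suc m * x ^ (n - m))"
    unfolding R_def sum_distrib_left
  proof (intro sum.cong refl)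
    fix m assume "m \<in> {..n}"
    hence "n = (n - m) + m" by simp
    hence eq: "Q ^ n * Q ^ (m * (m - 1) div 2) = Q ^ (n - m) * Q ^ (Suc m * m div 2)"
      by (metis power_add tri_Suc add.commute add.left_commute)
    have "y * Q ^ n * (gb Q n m * Q ^ (m * (m - 1) div 2) * y ^ m * x ^ (n - m)) =
          gb Q n m * (Q ^ n * Q ^ (m * (m - 1) div 2)) * (y * y ^ m) * x ^ (n - m)"
      by (simp only: ac_simps)
    also have "\<dots> = gb Q n m * (Q ^ (n - m) * Q ^ (Suc m * m div 2)) * (y * y ^ m) * x ^ (n - m)"
      by (simp only: eq)
    finally show "y * Q ^ n * (gb Q n m * Q ^ (m * (m - 1) div 2) * y ^ m * x ^ (n - m)) =
          Q ^ (n - m) * gb Q n m * Q ^ (Suc m * m div 2) * y ^ Suc m * x ^ (n - m)"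
      by (simp add: ac_simps)
  qed
  have "(\<Prod>k<Suc n. (x + y * Q ^ k)) = R * (x + y * Q ^ n)"
    using Suc by (simp add: R_def)
  also have "\<dots> = x * R + y * Q ^ n * R" by (simp add: algebra_simps)
  also have "\<dots> = x ^ Suc n + (\<Sum>m\<le>n. gb Q (Suc n) (Suc m) * Q ^ (Suc m * m div 2) * y ^ Suc m * x ^ (n - m))"
    unfolding xR2 yR by (simp add: sum.distrib algebra_simps)
  also have "\<dots> = (\<Sum>m\<le>Suc n. gb Q (Suc n) m * Q ^ (m * (m - 1) div 2) * y ^ m * x ^ (Suc n - m))"
    unfolding sum.atMost_Suc_shift by simp
  finally show ?case .
qed

definition qp :: "'a::comm_ring_1 \<Rightarrow> nat \<Rightarrow> 'a" where
  "qp Q n = (\<Prod>i\<in>{1..n}. (1 - Q ^ i))"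

lemma qp_Suc: "qp Q (Suc n) = qp Q n * (1 - Q ^ Suc n)"
  by (simp add: qp_def)

lemma gb_prod: "k \<le> n \<Longrightarrow> gb Q n k * qp Q k * qp Q (n - k) = qp Q n"
proof (induction n arbitrary: k)
  case 0 thus ?case by (simp add: qp_def)
next
  case (Suc n)
  show ?case
  proof (cases k)
    case 0 thus ?thesis by (simp add: qp_def)
  next
    case (Suc j)
    hence jn: "j \<le> n" using Suc.prems by simp
    have t2: "Q ^ (n - j) * gb Q n j * qp Q (Suc j) * qp Q (n - j) = Q ^ (n - j) * qp Q n * (1 - Q ^ Suc j)"
    proof -
      have "Q ^ (n - j) * gb Q n j * qp Q (Suc j) * qp Q (n - j)
          = Q ^ (n - j) * (gb Q n j * qp Q j * qp Q (n - j)) * (1 - Q ^ Suc j)"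
        by (simp only: qp_Suc ac_simps)
      thus ?thesis using Suc.IH[OF jn] by simp
    qed
    have t1: "gb Q n (Suc j) * qp Q (Suc j) * qp Q (n - j) = qp Q n * (1 - Q ^ (n - j))"
    proof (cases "j = n")
      case True thus ?thesis by (simp add: gb_gt)
    next
      case False
      hence "Suc j \<le> n" using jn by simp
      hence "n - j = Suc (n - Suc j)" by simp
      hence "qp Q (n - j) = qp Q (n - Suc j) * (1 - Q ^ (n - j))" by (simp add: qp_Suc)
      hence "gb Q n (Suc j) * qp Q (Suc j) * qp Q (n - j)
          = (gb Q n (Suc j) * qp Q (Suc j) * qp Q (n - Suc j)) * (1 - Q ^ (n - j))"
        by (simp only: ac_simps)
      thus ?thesis using Suc.IH[OF \<open>Suc j \<le> n\<close>] by simp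
    qed
    have "gb Q (Suc n) k * qp Q k * qp Q (Suc n - k)
        = gb Q n (Suc j) * qp Q (Suc j) * qp Q (n - j) + Q ^ (n - j) * gb Q n j * qp Q (Suc j) * qp Q (n - j)"
      using Suc by (simp add: algebra_simps)
    also have "\<dots> = qp Q n * (1 - Q ^ (n - j)) + Q ^ (n - j) * qp Q n * (1 - Q ^ Suc j)"
      using t1 t2 by simp
    also have "\<dots> = qp Q n * (1 - Q ^ (n - j) * Q ^ Suc j)" by (simp add: algebra_simps)
    also have "Q ^ (n - j) * Q ^ Suc j = Q ^ Suc n" using jn by (simp only: flip: power_add) simp
    finally show ?thesis by (simp add: qp_Suc)
  qed
qed

definition dd :: "nat \<Rightarrow> nat \<Rightarrow> nat" where
  "dd m n = (if n \<le> m then m - n else n - m)"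

lemma prod_split_add: "(\<Prod>k<a+(b::nat). f k) = (\<Prod>k<a. f k) * (\<Prod>i<b. f (a+i))"
  by (induction b) (simp_all add: mult.assoc)

lemma prod_Qpow: "(\<Prod>k<n. ((p::'a::comm_ring_1)^2) ^ k) = p ^ (n * (n - 1))"
proof (induction n)
  case 0 thus ?case by simp
next
  case (Suc n)
  have e: "n * (n - 1) + 2 * n = Suc n * (Suc n - 1)" by (cases n) (simp_all add: algebra_simps)
  have "(\<Prod>k<Suc n. (p^2)^k) = p ^ (n * (n - 1)) * (p^2)^n" using Suc by simp
  also have "\<dots> = p ^ (n * (n - 1) + 2 * n)" by (simp add: power_add power_mult)
  also have "\<dots> = p ^ (Suc n * (Suc n - 1))" by (simp only: e)
  finally show ?case .
qed

lemma exp_id: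
  assumes "m \<le> 2 * Suc n'"
  shows "m * (m - 1) + (2 * Suc n' - m) * (1 + 2 * n')
       = Suc n' * (Suc n' - 1) + Suc n' * (1 + 2 * n') + (dd m (Suc n'))^2"
proof -
  define n where "n = Suc n'"
  have mi: "int m * int (m - 1) = int m * (int m - 1)" by (cases m) (auto simp: algebra_simps)
  have ni: "int n * int (n - 1) = int n * (int n - 1)" by (cases n) (auto simp: algebra_simps)
  have ki: "int (2 * n - m) = 2 * int n - int m" using assms n_def by simp
  have di: "int ((dd m n)^2) = (int m - int n)^2"
    by (auto simp: dd_def power2_eq_square of_nat_diff algebra_simps)
  have "int (m * (m - 1) + (2 * n - m) * (1 + 2 * n'))
      = int (n * (n - 1) + n * (1 + 2 * n') + (dd m n)^2)"
    unfolding of_nat_add of_nat_mult mi ni ki di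
    using n_def by (simp add: algebra_simps power2_eq_square)
  thus ?thesis unfolding n_def by (simp only: of_nat_eq_iff)
qed

lemma fjtp:
  fixes p z :: "'a::idom"
  assumes "p \<noteq> 0"
  shows "(\<Prod>k<n. (1 + z * p * (p^2)^k) * (z + p * (p^2)^k))
       = (\<Sum>m\<le>2*n. gb (p^2) (2*n) m * p ^ ((dd m n)^2) * z ^ m)"
proof (cases n)
  case 0 thus ?thesis by (simp add: dd_def)
next
  case (Suc n')
  define Q where "Q = p^2"
  define x where "x = p * Q ^ n'"
  define C where "C = p ^ (n * (n - 1) + n * (1 + 2 * n'))"
  have Cnz: "C \<noteq> 0" using assms by (simp add: C_def)
  have x1: "x = p ^ (1 + 2 * n')" by (simp add: x_def Q_def power_add power_mult)
  have x_pow: "x ^ k = p ^ (k * (1 + 2 * n'))" for k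
    unfolding x1 by (metis mult.commute power_mult)
  have Q_pow: "Q ^ (m * (m - 1) div 2) = p ^ (m * (m - 1))" for m
  proof -
    have "even (m * (m - 1))" by (cases m) auto
    hence "2 * (m * (m - 1) div 2) = m * (m - 1)" by simp
    thus ?thesis by (metis Q_def power_mult)
  qed
  have H: "(\<Prod>k<2*n. (x + z * Q ^ k)) = (\<Sum>m\<le>2*n. gb Q (2*n) m * Q ^ (m * (m - 1) div 2) * z ^ m * x ^ (2*n - m))"
    by (rule qbin)
  have L1: "(\<Prod>k<n. (x + z * Q ^ k)) = p ^ (n * (n - 1)) * (\<Prod>k<n. (z + p * Q ^ k))"
  proof -
    have "(\<Prod>k<n. (x + z * Q ^ k)) = (\<Prod>k<n. Q ^ k * (z + p * Q ^ (n' - k)))"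
    proof (intro prod.cong refl)
      fix k assume "k \<in> {..<n}"
      hence "n' = k + (n' - k)" using Suc by simp
      hence "Q ^ n' = Q ^ k * Q ^ (n' - k)" by (metis power_add)
      thus "x + z * Q ^ k = Q ^ k * (z + p * Q ^ (n' - k))" by (simp add: x_def algebra_simps)
    qed
    also have "\<dots> = (\<Prod>k<n. Q ^ k) * (\<Prod>k<n. (z + p * Q ^ (n' - k)))"
      by (simp add: prod.distrib)
    also have "(\<Prod>k<n. (z + p * Q ^ (n' - k))) = (\<Prod>k<n. (z + p * Q ^ k))"
      using prod.nat_diff_reindex[of "\<lambda>k. z + p * Q ^ k" n] Suc by simp
    also have "(\<Prod>k<n. Q ^ k) = p ^ (n * (n - 1))" unfolding Q_def by (rule prod_Qpow)
    finally show ?thesis .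
  qed
  have L2: "(\<Prod>i<n. (x + z * Q ^ (n + i))) = x ^ n * (\<Prod>i<n. (1 + z * p * Q ^ i))"
  proof -
    have "(\<Prod>i<n. (x + z * Q ^ (n + i))) = (\<Prod>i<n. x * (1 + z * p * Q ^ i))"
    proof (intro prod.cong refl)
      fix i
      have "Q ^ (n + i) = p * p * Q ^ n' * Q ^ i" using Suc by (simp add: Q_def power_add power2_eq_square)
      thus "x + z * Q ^ (n + i) = x * (1 + z * p * Q ^ i)" by (simp add: x_def algebra_simps)
    qed
    thus ?thesis by (simp add: prod.distrib)
  qed
  have LHS: "(\<Prod>k<2*n. (x + z * Q ^ k)) = C * (\<Prod>k<n. (1 + z * p * Q^k) * (z + p * Q^k))"
  proof -
    have "(\<Prod>k<2*n. (x + z * Q ^ k)) = (\<Prod>k<n. (x + z * Q ^ k)) * (\<Prod>i<n. (x + z * Q ^ (n + i)))"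
      using prod_split_add[of "\<lambda>k. x + z * Q ^ k" n n] by (simp add: mult_2)
    also have "\<dots> = p ^ (n * (n - 1)) * x ^ n * ((\<Prod>k<n. (1 + z * p * Q^k)) * (\<Prod>k<n. (z + p * Q^k)))"
      unfolding L1 L2 by (simp add: ac_simps)
    also have "p ^ (n * (n - 1)) * x ^ n = C" unfolding x_pow C_def by (simp add: power_add)
    finally show ?thesis by (simp add: prod.distrib)
  qed
  have RHS: "(\<Sum>m\<le>2*n. gb Q (2*n) m * Q ^ (m * (m - 1) div 2) * z ^ m * x ^ (2*n - m))
      = C * (\<Sum>m\<le>2*n. gb Q (2*n) m * p ^ ((dd m n)^2) * z ^ m)"
    unfolding sum_distrib_left
  proof (intro sum.cong refl)
    fix m assume "m \<in> {..2*n}"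
    hence "m \<le> 2 * Suc n'" using Suc by simp
    from exp_id[OF this] have e: "p ^ (m * (m - 1)) * x ^ (2 * n - m) = C * p ^ ((dd m n)^2)"
      unfolding x_pow C_def using Suc by (simp flip: power_add)
    show "gb Q (2*n) m * Q ^ (m * (m - 1) div 2) * z ^ m * x ^ (2*n - m)
        = C * (gb Q (2*n) m * p ^ ((dd m n)^2) * z ^ m)"
    proof -
      have "gb Q (2*n) m * Q ^ (m * (m - 1) div 2) * z ^ m * x ^ (2*n - m)
          = gb Q (2*n) m * z ^ m * (p ^ (m * (m - 1)) * x ^ (2 * n - m))"
        unfolding Q_pow by (simp add: ac_simps)
      also have "\<dots> = gb Q (2*n) m * z ^ m * (C * p ^ ((dd m n)^2))" by (simp only: e)
      finally show ?thesis by (simp add: ac_simps)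
    qed
  qed
  have "C * (\<Prod>k<n. (1 + z * p * Q^k) * (z + p * Q^k)) = C * (\<Sum>m\<le>2*n. gb Q (2*n) m * p ^ ((dd m n)^2) * z ^ m)"
    using H LHS RHS by simp
  hence "(\<Prod>k<n. (1 + z * p * Q^k) * (z + p * Q^k)) = (\<Sum>m\<le>2*n. gb Q (2*n) m * p ^ ((dd m n)^2) * z ^ m)"
    using Cnz by simp
  thus ?thesis by (simp add: Q_def)
qed

definition eqN :: "nat \<Rightarrow> int fps \<Rightarrow> int fps \<Rightarrow> bool" where
  "eqN N f g \<longleftrightarrow> (\<forall>i\<le>N. fps_nth f i = fps_nth g i)"

lemma eqN_refl [simp]: "eqN N f f" by (simp add: eqN_def)
lemma eqN_sym: "eqN N f g \<Longrightarrow> eqN N g f" by (simp add: eqN_def)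
lemma eqN_trans [trans]: "eqN N f g \<Longrightarrow> eqN N g h \<Longrightarrow> eqN N f h" by (simp add: eqN_def)
lemma eqN_eq_trans [trans]: "f = g \<Longrightarrow> eqN N g h \<Longrightarrow> eqN N f h" by simp
lemma eqN_trans_eq [trans]: "eqN N f g \<Longrightarrow> g = h \<Longrightarrow> eqN N f h" by simp
lemma eqN_mono: "eqN N f g \<Longrightarrow> M \<le> N \<Longrightarrow> eqN M f g" by (simp add: eqN_def)

lemma eqN_add: "eqN N a b \<Longrightarrow> eqN N c d \<Longrightarrow> eqN N (a + c) (b + d)"
  by (simp add: eqN_def)
lemma eqN_diff: "eqN N a b \<Longrightarrow> eqN N c d \<Longrightarrow> eqN N (a - c) (b - d)"
  by (simp add: eqN_def)
lemma eqN_mult: "eqN N a b \<Longrightarrow> eqN N c d \<Longrightarrow> eqN N (a * c) (b * d)"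
  unfolding eqN_def fps_mult_nth by auto

lemma eqN_sum: "(\<And>k. k \<in> S \<Longrightarrow> eqN N (f k) (g k)) \<Longrightarrow> eqN N (sum f S) (sum g S)"
  by (simp add: eqN_def fps_sum_nth)

lemma eqN_prod: "(\<And>k. k \<in> S \<Longrightarrow> eqN N (f k) (g k)) \<Longrightarrow> eqN N (prod f S) (prod g S)"
proof (induction S rule: infinite_finite_induct)
  case (insert x F)
  thus ?case by (simp add: eqN_mult)
qed auto

lemma eqN_Xbig: "N < k \<Longrightarrow> eqN N (1 + c * fps_X ^ k) 1"
  by (simp add: eqN_def fps_X_power_mult_right_nth)

lemma eqN_prod_sub:
  assumes "finite S" "T \<subseteq> S" "\<And>k. k \<in> S - T \<Longrightarrow> eqN N (f k) 1"
  shows "eqN N (prod f S) (prod f T)"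
proof -
  have "prod f S = prod f T * prod f (S - T)"
    using assms by (metis mult.commute prod.subset_diff)
  also have "eqN N \<dots> (prod f T * prod (\<lambda>_. 1) (S - T))"
    by (intro eqN_mult eqN_refl eqN_prod assms(3))
  finally show ?thesis by simp
qed

lemma eqN_shift_down:
  assumes "eqN (N + c) (fps_X ^ c * f) (fps_X ^ c * g)"
  shows "eqN N f g"
  unfolding eqN_def
proof (intro allI impI)
  fix i assume "i \<le> N"
  hence "i + c \<le> N + c" by simp
  with assms have "fps_nth (fps_X ^ c * f) (i + c) = fps_nth (fps_X ^ c * g) (i + c)"
    unfolding eqN_def by blast
  thus "fps_nth f i = fps_nth g i" by (simp add: fps_X_power_mult_nth)
qed

lemma eqN_shift_up:
  assumes "eqN N f g" "c \<le> e"
  shows "eqN (N + c) (fps_X ^ e * f) (fps_X ^ e * g)"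
  using assms unfolding eqN_def by (auto simp: fps_X_power_mult_nth)

lemma eqN_Xzero:
  assumes "K < e"
  shows "eqN K (fps_X ^ e * f) 0"
  using assms unfolding eqN_def by (auto simp: fps_X_power_mult_nth)

lemma eqN_cancel0:
  assumes "eqN N (F * E) 0" "fps_nth E 0 = 1"
  shows "eqN N F 0"
  unfolding eqN_def
proof (intro allI impI)
  fix i show "i \<le> N \<Longrightarrow> fps_nth F i = fps_nth 0 i"
  proof (induction i rule: less_induct)
    case (less i)
    have "0 = fps_nth (F * E) i" using assms(1) less.prems unfolding eqN_def by simp
    also have "\<dots> = (\<Sum>j=0..i. fps_nth F j * fps_nth E (i - j))" by (rule fps_mult_nth)
    also have "\<dots> = (\<Sum>j\<in>{i}. fps_nth F j * fps_nth E (i - j))"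
    proof (rule sum.mono_neutral_right)
      show "\<forall>j\<in>{0..i} - {i}. fps_nth F j * fps_nth E (i - j) = 0"
        using less by auto
    qed auto
    also have "\<dots> = fps_nth F i" using assms(2) by simp
    finally show ?case by simp
  qed
qed

lemma eqN_cancel:
  assumes "eqN N (D * E) E" "fps_nth E 0 = 1"
  shows "eqN N D 1"
proof -
  have "eqN N ((D - 1) * E) 0" using assms(1) by (simp add: eqN_def algebra_simps)
  hence "eqN N (D - 1) 0" using assms(2) by (rule eqN_cancel0)
  thus ?thesis by (simp add: eqN_def)
qed

lemma sum_split_mid:
  "(\<Sum>m\<le>2*n. f m) = f n + (\<Sum>j\<in>{1..n}. f (n + j) + f (n - j))" for n :: nat
proof -
  have "(\<Sum>m\<le>2*n. f m) = sum f {0..n+n}" by (simp add: atLeast0AtMost mult_2)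
  also have "\<dots> = sum f {0..n} + sum f {n+1..n+n}" by (rule sum.ub_add_nat) simp
  also have "sum f {n+1..n+n} = (\<Sum>j\<in>{1..n}. f (n + j))"
    using sum.shift_bounds_cl_nat_ivl[of f 1 n n] by (simp add: add.commute)
  also have "sum f {0..n} = sum f {..<n} + f n"
    by (simp add: atLeast0AtMost lessThan_Suc_atMost[symmetric])
  also have "sum f {..<n} = (\<Sum>i<n. f (n - Suc i))" by (rule sum.nat_diff_reindex[symmetric])
  also have "\<dots> = (\<Sum>j\<in>{1..n}. f (n - j))" using sum.atLeast1_atMost_eq[of "\<lambda>j. f (n - j)" n] by simp
  finally show ?thesis by (simp add: sum.distrib ac_simps)
qed

lemma qp_X_pow: "qp ((fps_X :: int fps) ^ c) k = (\<Prod>i\<in>{1..k}. (1 + (-1) * fps_X ^ (c * i)))"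
  unfolding qp_def by (simp add: power_mult)

lemma qp_stable:
  assumes "c \<ge> 1" "N \<le> k"
  shows "eqN N (qp ((fps_X :: int fps) ^ c) k) (qp (fps_X ^ c) N)"
  unfolding qp_X_pow
proof (rule eqN_prod_sub)
  fix i assume "i \<in> {1..k} - {1..N}"
  hence "N < c * i" using assms by (auto intro: less_le_trans[of _ i] simp: not_le)
  thus "eqN N (1 + (-1) * fps_X ^ (c * i)) 1" by (rule eqN_Xbig)
qed (use assms in auto)

lemma qp_nth0:
  assumes "c \<ge> 1"
  shows "fps_nth (qp ((fps_X :: int fps) ^ c) k) 0 = 1"
proof -
  have "eqN 0 (qp ((fps_X :: int fps) ^ c) k) (qp (fps_X ^ c) 0)"
    unfolding qp_X_pow
  proof (rule eqN_prod_sub)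
    fix i assume "i \<in> {1..k} - {1..0}"
    hence "0 < c * i" using assms by auto
    thus "eqN 0 (1 + (-1) * fps_X ^ (c * i)) 1" by (rule eqN_Xbig)
  qed auto
  thus ?thesis by (simp add: eqN_def qp_def)
qed

lemma gbE:
  assumes "c \<ge> 1" "m \<le> 2 * n" "dd m n \<le> N" "n = 2 * N + 1"
  shows "eqN N (gb ((fps_X :: int fps) ^ c) (2 * n) m * qp (fps_X ^ c) n) 1"
proof -
  define Q :: "int fps" where "Q = fps_X ^ c"
  define E where "E = qp Q n"
  have st: "eqN N (qp Q k) E" if "N \<le> k" for k
  proof -
    have "eqN N (qp Q k) (qp Q N)" unfolding Q_def using assms(1) that by (rule qp_stable)
    moreover have "eqN N (qp Q n) (qp Q N)" unfolding Q_def using assms(1) assms(4) by (intro qp_stable) auto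
    ultimately show ?thesis unfolding E_def by (meson eqN_sym eqN_trans)
  qed
  have m1: "N \<le> m" and m2: "N \<le> 2 * n - m" using assms(2,3,4) by (auto simp: dd_def split: if_splits)
  have "eqN N (gb Q (2 * n) m * E * E) (gb Q (2 * n) m * qp Q m * qp Q (2 * n - m))"
    by (intro eqN_mult eqN_refl eqN_sym[OF st] m1 m2)
  also have "gb Q (2 * n) m * qp Q m * qp Q (2 * n - m) = qp Q (2 * n)"
    using assms(2) by (rule gb_prod)
  also have "eqN N \<dots> E" using assms(4) by (intro st) auto
  finally have "eqN N ((gb Q (2 * n) m * E) * E) E" by (simp add: mult.assoc)
  moreover have "fps_nth E 0 = 1" unfolding E_def Q_def using assms(1) by (rule qp_nth0)
  ultimately show ?thesis using eqN_cancel unfolding E_def Q_def by blast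
qed

lemma expo: assumes "b < (a::nat)" shows "b * j + j \<le> a * j^2"
proof -
  have "j \<le> j^2" by (cases j) (auto simp: power2_eq_square)
  hence "(b + 1) * j \<le> (b + 1) * j^2" by (rule mult_le_mono2)
  also have "\<dots> \<le> a * j^2" using assms by (intro mult_le_mono1) simp
  finally show ?thesis by (simp add: algebra_simps)
qed

lemma expo_dd:
  assumes "b < (a::nat)"
  shows "b * n \<le> a * (dd m n)^2 + b * m"
    and "N < dd m n \<Longrightarrow> N + b * n < a * (dd m n)^2 + b * m"
proof -
  define d where "d = dd m n"
  have ex: "b * d + d \<le> a * d^2" using assms by (rule expo)
  have "b * n \<le> a * d^2 + b * m \<and> (N < d \<longrightarrow> N + b * n < a * d^2 + b * m)"
  proof (cases "n \<le> m")
    case True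
    hence "m = n + d" by (simp add: d_def dd_def)
    hence "b * m = b * n + b * d" by (simp add: algebra_simps)
    thus ?thesis using ex by linarith
  next
    case False
    hence "n = m + d" by (simp add: d_def dd_def)
    hence "b * n = b * m + b * d" by (simp add: algebra_simps)
    thus ?thesis using ex by linarith
  qed
  thus "b * n \<le> a * (dd m n)^2 + b * m" "N < dd m n \<Longrightarrow> N + b * n < a * (dd m n)^2 + b * m"
    by (auto simp: d_def)
qed

lemma jtp_trunc:
  fixes a b N :: nat and s :: int
  assumes ab: "b < a" and ss: "s * s = 1"
  defines "S \<equiv> fps_const s" and "n \<equiv> 2 * N + 1"
  shows "eqN N (qp (fps_X ^ (2 * a)) n * (\<Prod>k<n. (1 + S * fps_X ^ (a * (2 * k + 1) + b)) * (1 + S * fps_X ^ (a * (2 * k + 1) - b))))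
               (1 + (\<Sum>j\<in>{1..n}. S ^ j * (fps_X ^ (a * j^2 + b * j) + fps_X ^ (a * j^2 - b * j))))"
proof -
  define X :: "int fps" where "X = fps_X"
  define Q where "Q = X ^ (2 * a)"
  define E where "E = qp Q n"
  define Prod where "Prod = (\<Prod>k<n. (1 + S * X ^ (a * (2 * k + 1) + b)) * (1 + S * X ^ (a * (2 * k + 1) - b)))"
  define Th where "Th = 1 + (\<Sum>j\<in>{1..n}. S ^ j * (X ^ (a * j^2 + b * j) + X ^ (a * j^2 - b * j)))"
  define e where "e m = a * (dd m n)^2 + b * m" for m
  have SS: "S * S = 1" unfolding S_def fps_const_mult[symmetric] using ss by simp
  have SSn: "S ^ k * S ^ k = 1" for k by (metis SS power_mult_distrib power_one)
  have pnz: "(X ^ a) \<noteq> 0" by (simp add: X_def)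
  have pQ: "(X ^ a)^2 = Q" by (simp add: Q_def flip: power_mult) (simp add: mult.commute)
  have F: "(\<Prod>k<n. (1 + (S * X ^ b) * X ^ a * ((X ^ a)^2)^k) * ((S * X ^ b) + X ^ a * ((X ^ a)^2)^k))
       = (\<Sum>m\<le>2*n. gb ((X ^ a)^2) (2*n) m * (X ^ a) ^ ((dd m n)^2) * (S * X ^ b) ^ m)"
    by (rule fjtp[OF pnz])
  have fac: "(1 + (S * X ^ b) * X ^ a * Q^k) * ((S * X ^ b) + X ^ a * Q^k)
           = (S * X ^ b) * ((1 + S * X ^ (a * (2 * k + 1) + b)) * (1 + S * X ^ (a * (2 * k + 1) - b)))" for k
  proof -
    have e1: "X ^ b * X ^ a * Q ^ k = X ^ (a * (2 * k + 1) + b)"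
      by (simp add: Q_def algebra_simps flip: power_add power_mult)
    have "b \<le> a * (2 * k + 1)" using ab by (simp add: algebra_simps)
    hence e2: "X ^ a * Q ^ k = X ^ b * X ^ (a * (2 * k + 1) - b)"
      by (simp add: Q_def algebra_simps flip: power_add power_mult)
    have "(1 + (S * X ^ b) * X ^ a * Q^k) * ((S * X ^ b) + X ^ a * Q^k)
        = (1 + S * (X ^ b * X ^ a * Q ^ k)) * (S * X ^ b + (S * S) * (X ^ b * X ^ (a * (2 * k + 1) - b)))"
      unfolding e2 SS by (simp add: ac_simps)
    also have "\<dots> = (S * X ^ b) * ((1 + S * X ^ (a * (2 * k + 1) + b)) * (1 + S * X ^ (a * (2 * k + 1) - b)))"
      unfolding e1 by (simp add: algebra_simps)
    finally show ?thesis .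
  qed
  have LHS: "(S * X ^ b) ^ n * Prod = (\<Sum>m\<le>2*n. gb Q (2*n) m * X ^ (a * (dd m n)^2) * (S * X ^ b) ^ m)"
  proof -
    have "(S * X ^ b) ^ n * Prod = (\<Prod>k<n. (1 + (S * X ^ b) * X ^ a * Q^k) * ((S * X ^ b) + X ^ a * Q^k))"
      unfolding fac Prod_def by (simp add: prod.distrib)
    also have "\<dots> = (\<Sum>m\<le>2*n. gb Q (2*n) m * X ^ (a * (dd m n)^2) * (S * X ^ b) ^ m)"
      using F unfolding pQ by (simp add: power_mult)
    finally show ?thesis .
  qed
  have step1: "X ^ (b * n) * (E * Prod) = (\<Sum>m\<le>2*n. S ^ (n + m) * (X ^ e m * (gb Q (2*n) m * E)))"
  proof -
    have "X ^ (b * n) * (E * Prod) = S ^ n * E * ((S * X ^ b) ^ n * Prod)"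
      by (simp add: power_mult_distrib algebra_simps SSn flip: power_mult)
    also have "\<dots> = (\<Sum>m\<le>2*n. S ^ (n + m) * (X ^ e m * (gb Q (2*n) m * E)))"
      unfolding LHS sum_distrib_left
      by (intro sum.cong refl) (simp add: e_def power_mult_distrib power_add algebra_simps flip: power_mult)
    finally show ?thesis .
  qed
  have step2: "eqN (N + b * n) (X ^ (b * n) * (E * Prod)) (\<Sum>m\<le>2*n. S ^ (n + m) * (X ^ e m * 1))"
    unfolding step1
  proof (rule eqN_sum, rule eqN_mult[OF eqN_refl])
    fix m assume m: "m \<in> {..2*n}"
    show "eqN (N + b * n) (X ^ e m * (gb Q (2*n) m * E)) (X ^ e m * 1)"
    proof (cases "dd m n \<le> N")
      case True
      have g: "eqN N (gb Q (2*n) m * E) 1" unfolding Q_def E_def X_def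
        using ab m True by (intro gbE) (auto simp: n_def)
      have be: "b * n \<le> e m" using expo_dd(1)[OF ab] by (simp add: e_def)
      show ?thesis unfolding X_def by (rule eqN_shift_up[OF g be])
    next
      case False
      hence "N + b * n < e m" using expo_dd(2)[OF ab] by (simp add: e_def)
      hence "eqN (N + b * n) (X ^ e m * (gb Q (2*n) m * E)) 0" "eqN (N + b * n) (X ^ e m * 1) 0"
        unfolding X_def by (auto intro: eqN_Xzero simp del: mult_1_right)
      thus ?thesis by (meson eqN_sym eqN_trans)
    qed
  qed
  have step3: "(\<Sum>m\<le>2*n. S ^ (n + m) * (X ^ e m * 1)) = X ^ (b * n) * Th"
  proof -
    have S2: "S ^ (2 * k) = 1" for k using SSn[of k] by (simp add: mult_2 power_add)
    have t0: "S ^ (n + n) * (X ^ e n * 1) = X ^ (b * n)"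
      using S2[of n] by (simp add: e_def dd_def mult_2)
    have tj: "S ^ (n + (n + j)) * (X ^ e (n + j) * 1) + S ^ (n + (n - j)) * (X ^ e (n - j) * 1)
        = X ^ (b * n) * (S ^ j * (X ^ (a * j^2 + b * j) + X ^ (a * j^2 - b * j)))"
      if j: "j \<in> {1..n}" for j
    proof -
      have jn: "j \<le> n" using j by simp
      have s1: "S ^ (n + (n + j)) = S ^ j" using S2[of n] by (simp add: mult_2 power_add)
      have "S ^ (n + (n - j)) * S ^ j = S ^ (2 * n)" using jn by (simp add: mult_2 flip: power_add)
      hence "S ^ (n + (n - j)) * (S ^ j * S ^ j) = S ^ j" using S2[of n] by (simp add: mult.assoc[symmetric])
      hence s2: "S ^ (n + (n - j)) = S ^ j" using SSn[of j] by simp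
      have e1: "e (n + j) = b * n + (a * j^2 + b * j)" by (simp add: e_def dd_def algebra_simps)
      have bj: "b * j \<le> a * j^2" using expo[OF ab, of j] by simp
      have "b * (n - j) + b * j = b * n" using jn by (simp add: diff_mult_distrib2)
      moreover have "dd (n - j) n = j" using j by (auto simp: dd_def)
      ultimately have e2: "e (n - j) = b * n + (a * j^2 - b * j)" using bj jn by (simp add: e_def)
      show ?thesis unfolding s1 s2 e1 e2 by (simp only: power_add) (simp add: algebra_simps)
    qed
    have "(\<Sum>m\<le>2*n. S ^ (n + m) * (X ^ e m * 1))
        = X ^ (b * n) + (\<Sum>j\<in>{1..n}. X ^ (b * n) * (S ^ j * (X ^ (a * j^2 + b * j) + X ^ (a * j^2 - b * j))))"
      unfolding sum_split_mid t0 by (intro arg_cong2[where f = "(+)"] refl sum.cong tj)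
    also have "\<dots> = X ^ (b * n) * Th" unfolding Th_def by (simp add: algebra_simps sum_distrib_left)
    finally show ?thesis .
  qed
  have "eqN N (E * Prod) Th"
    using step2[unfolded step3] unfolding X_def by (rule eqN_shift_down)
  thus ?thesis unfolding E_def Prod_def Th_def Q_def X_def by simp
qed

definition FF :: "int fps \<Rightarrow> nat set \<Rightarrow> int fps" where
  "FF c T = (\<Prod>k\<in>T. (1 + c * fps_X ^ k))"

definition RR :: "nat \<Rightarrow> nat \<Rightarrow> nat \<Rightarrow> nat set" where
  "RR N d r = {k. 0 < k \<and> k \<le> N \<and> k mod d = r}"

lemma RR_finite [simp]: "finite (RR N d r)" by (simp add: RR_def)

lemma FF_trunc: "finite T \<Longrightarrow> eqN N (FF c T) (FF c (T \<inter> {..N}))"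
  unfolding FF_def by (rule eqN_prod_sub) (auto intro: eqN_Xbig)

lemma FF_trunc_eq: "finite T \<Longrightarrow> T \<inter> {..N} = U \<Longrightarrow> eqN N (FF c T) (FF c U)"
  using FF_trunc by blast

lemma FF_union: "finite A \<Longrightarrow> finite B \<Longrightarrow> A \<inter> B = {} \<Longrightarrow> FF c (A \<union> B) = FF c A * FF c B"
  unfolding FF_def by (rule prod.union_disjoint)

lemma FF_double: "FF 1 T * FF (-1) T = FF (-1) ((\<lambda>k. 2 * k) ` T)"
proof -
  have "FF 1 T * FF (-1) T = (\<Prod>k\<in>T. (1 + (-1) * fps_X ^ (2 * k)))"
    unfolding FF_def prod.distrib[symmetric]
    by (intro prod.cong refl) (simp add: algebra_simps power_mult power2_eq_square flip: power_add)
  also have "\<dots> = FF (-1) ((\<lambda>k. 2 * k) ` T)"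
    unfolding FF_def by (subst prod.reindex) (auto simp: inj_on_def)
  finally show ?thesis .
qed

lemma qp_FF:
  assumes "c \<ge> 1" "N < K"
  shows "eqN N (qp ((fps_X :: int fps) ^ c) K) (FF (-1) (RR N c 0))"
proof -
  have "qp ((fps_X :: int fps) ^ c) K = FF (-1) ((\<lambda>i. c * i) ` {1..K})"
    unfolding qp_X_pow FF_def using assms(1) by (subst prod.reindex) (auto simp: inj_on_def)
  also have "eqN N \<dots> (FF (-1) (RR N c 0))"
  proof (rule FF_trunc_eq)
    show "(\<lambda>i. c * i) ` {1..K} \<inter> {..N} = RR N c 0"
    proof
      show "(\<lambda>i. c * i) ` {1..K} \<inter> {..N} \<subseteq> RR N c 0" using assms(1) by (auto simp: RR_def)
      show "RR N c 0 \<subseteq> (\<lambda>i. c * i) ` {1..K} \<inter> {..N}"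
      proof
        fix k assume "k \<in> RR N c 0"
        hence k: "0 < k" "k \<le> N" "k mod c = 0" by (auto simp: RR_def)
        hence "k = c * (k div c)" by (metis mult_div_mod_eq add_0_right)
        moreover have "k div c \<le> k" by simp
        moreover have "1 \<le> k div c"
        proof (rule ccontr)
          assume "\<not> 1 \<le> k div c"
          hence "k div c = 0" by simp
          hence "k = 0" using \<open>k = c * (k div c)\<close> by simp
          thus False using k by simp
        qed
        moreover have "k div c \<le> K" using \<open>k div c \<le> k\<close> k assms by linarith
        ultimately show "k \<in> (\<lambda>i. c * i) ` {1..K} \<inter> {..N}" using k assms
          by (intro IntI image_eqI[of _ _ "k div c"]) auto
      qed
    qed
  qed simp
  finally show ?thesis .
qed

lemma lin_FF:
  assumes "0 < r" "r < d" "N < K"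
  shows "eqN N (\<Prod>k<K. (1 + c * fps_X ^ (d * k + r))) (FF c (RR N d r))"
proof -
  have "(\<Prod>k<K. (1 + c * fps_X ^ (d * k + r))) = FF c ((\<lambda>k. d * k + r) ` {..<K})"
    unfolding FF_def using assms by (subst prod.reindex) (auto simp: inj_on_def)
  also have "eqN N \<dots> (FF c (RR N d r))"
  proof (rule FF_trunc_eq)
    show "(\<lambda>k. d * k + r) ` {..<K} \<inter> {..N} = RR N d r"
    proof
      show "(\<lambda>k. d * k + r) ` {..<K} \<inter> {..N} \<subseteq> RR N d r" using assms by (auto simp: RR_def)
      show "RR N d r \<subseteq> (\<lambda>k. d * k + r) ` {..<K} \<inter> {..N}"
      proof
        fix k assume "k \<in> RR N d r"
        hence k: "0 < k" "k \<le> N" "k mod d = r" by (auto simp: RR_def)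
        hence "k = d * (k div d) + r" by (metis mult_div_mod_eq)
        moreover have "k div d \<le> k" by simp
        moreover have "k div d < K" using \<open>k div d \<le> k\<close> k assms by linarith
        ultimately show "k \<in> (\<lambda>k. d * k + r) ` {..<K} \<inter> {..N}" using k assms
          by (intro IntI image_eqI[of _ _ "k div d"]) auto
      qed
    qed
  qed simp
  finally show ?thesis .
qed

lemma fc_m1: "fps_const (-1::int) = -1"
  using fps_const_neg[of "1::int"] by simp

lemma m2: "(k::nat) mod (b * c) = b * (k div b mod c) + k mod b" by (rule mod_mult2_eq)
lemma t1: "((0::nat) < k \<and> k \<le> N \<and> k mod 12 = 9 \<or> 0 < k \<and> k \<le> N \<and> k mod 12 = 3) = (0 < k \<and> k \<le> N \<and> k mod 6 = 3)"
proof -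
  have e: "k mod 12 = 6 * (k div 6 mod 2) + k mod 6" using m2[of k 6 2] by simp
  have "k div 6 mod 2 < 2" by simp
  hence "k div 6 mod 2 = 0 \<or> k div 6 mod 2 = 1" by linarith
  moreover have "k mod 6 < 6" by simp
  ultimately show ?thesis using e by auto
qed
lemma t3: "((0::nat) < k \<and> k \<le> N \<and> k mod 6 = 1 \<or> 0 < k \<and> k \<le> N \<and> k mod 6 = 3 \<or> 0 < k \<and> k \<le> N \<and> k mod 6 = 5) = (0 < k \<and> k \<le> N \<and> k mod 2 = 1)"
proof -
  have e: "k mod 6 = 2 * (k div 2 mod 3) + k mod 2" using m2[of k 2 3] by simp
  have "k div 2 mod 3 < 3" by simp
  hence "k div 2 mod 3 = 0 \<or> k div 2 mod 3 = 1 \<or> k div 2 mod 3 = 2" by linarith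
  moreover have "k mod 2 = 0 \<or> k mod 2 = 1" by linarith
  ultimately show ?thesis using e by auto
qed
lemma t4: "(k::nat) mod 12 = 6 \<Longrightarrow> k = 2 * (k div 2) \<and> k div 2 mod 6 = 3"
proof -
  assume a: "k mod 12 = 6"
  have e: "k mod 12 = 2 * (k div 2 mod 6) + k mod 2" using m2[of k 2 6] by simp
  have "k mod 2 = 0 \<or> k mod 2 = 1" by linarith
  have "k mod 12 mod 2 = k mod 2" by (rule mod_mod_cancel) simp
  hence r: "k mod 2 = 0" using a by simp
  hence "k = 2 * (k div 2)" by (metis add_0_right mult_div_mod_eq)
  thus ?thesis using e a r by simp
qed
lemma t5: "(m::nat) mod 6 = 3 \<Longrightarrow> (2 * m) mod 12 = 6"
  using mult_mod_right[of 2 m 6] by simp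

lemma RR_eq_test1: "RR N 12 9 \<union> RR N 12 3 = RR N 6 3"
  by (rule set_eqI) (simp add: RR_def t1)
lemma RR_eq_test2: "RR N 12 0 \<union> RR N 12 6 = RR N 6 0"
proof (rule set_eqI)
  fix k :: nat
  have e: "k mod 12 = 6 * (k div 6 mod 2) + k mod 6" using m2[of k 6 2] by simp
  have "k div 6 mod 2 < 2" by simp
  hence "k div 6 mod 2 = 0 \<or> k div 6 mod 2 = 1" by linarith
  moreover have "k mod 6 < 6" by simp
  ultimately show "k \<in> RR N 12 0 \<union> RR N 12 6 \<longleftrightarrow> k \<in> RR N 6 0" using e by (auto simp: RR_def)
qed
lemma RR_eq_test3: "RR N 6 1 \<union> RR N 6 3 \<union> RR N 6 5 = RR N 2 1"
  by (rule set_eqI) (simp add: RR_def t3 del: One_nat_def)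
lemma RR_dbl: "(\<lambda>k. 2 * k) ` RR N 6 3 \<inter> {..N} = RR N 12 6"
proof
  show "(\<lambda>k. 2 * k) ` RR N 6 3 \<inter> {..N} \<subseteq> RR N 12 6"
    by (auto simp: RR_def t5)
  show "RR N 12 6 \<subseteq> (\<lambda>k. 2 * k) ` RR N 6 3 \<inter> {..N}"
  proof
    fix k assume "k \<in> RR N 12 6"
    hence k: "0 < k" "k \<le> N" "k mod 12 = 6" by (auto simp: RR_def)
    from t4[OF k(3)] have "k = 2 * (k div 2)" "(k div 2) mod 6 = 3" by auto
    moreover have "0 < k div 2" using k \<open>k = 2 * (k div 2)\<close> by linarith
    ultimately show "k \<in> (\<lambda>k. 2 * k) ` RR N 6 3 \<inter> {..N}" using k
      by (intro IntI image_eqI[of _ _ "k div 2"]) (auto simp: RR_def)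
  qed
qed
lemma odd_RR: "{k. odd k \<and> k \<le> N} = RR N 2 1"
  by (rule set_eqI) (auto simp: RR_def odd_iff_mod_2_eq_one)

lemma prod_ident:
  fixes N :: nat
  defines "K \<equiv> 2 * N + 1"
  shows "eqN N (qp (fps_X ^ (2 * 3)) K * (\<Prod>k<K. (1 + fps_const (-1) * fps_X ^ (3 * (2 * k + 1) + 2)) * (1 + fps_const (-1) * fps_X ^ (3 * (2 * k + 1) - 2))))
     ((qp (fps_X ^ (2 * 6)) K * (\<Prod>k<K. (1 + fps_const 1 * fps_X ^ (6 * (2 * k + 1) + 3)) * (1 + fps_const 1 * fps_X ^ (6 * (2 * k + 1) - 3))))
      * (\<Prod>k\<in>{k. odd k \<and> k \<le> N}. (1 - fps_X ^ k)))"
proof -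
  have NK: "N < K" by (simp add: K_def)
  define F where "F = FF (-1)"
  define G where "G = FF 1"
  define R where "R = RR N"
  have A1: "eqN N (qp (fps_X ^ (2 * 3)) K * (\<Prod>k<K. (1 + fps_const (-1) * fps_X ^ (3 * (2 * k + 1) + 2)) * (1 + fps_const (-1) * fps_X ^ (3 * (2 * k + 1) - 2))))
     (F (R 6 0) * (F (R 6 5) * F (R 6 1)))"
  proof -
    have "(\<Prod>k<K. (1 + fps_const (-1) * (fps_X :: int fps) ^ (3 * (2 * k + 1) + 2)) * (1 + fps_const (-1) * fps_X ^ (3 * (2 * k + 1) - 2)))
        = (\<Prod>k<K. (1 + (-1) * fps_X ^ (6 * k + 5))) * (\<Prod>k<K. (1 + (-1) * fps_X ^ (6 * k + 1)))"
      unfolding prod.distrib[symmetric]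
      by (intro prod.cong refl) (simp add: algebra_simps fc_m1 del: fps_const_neg)
    moreover have "eqN N (qp (fps_X ^ (2 * 3)) K) (F (R 6 0))"
      unfolding F_def R_def using qp_FF[of 6 N K] NK by simp
    moreover have "eqN N (\<Prod>k<K. (1 + (-1) * fps_X ^ (6 * k + 5))) (F (R 6 5))"
      unfolding F_def R_def using NK by (intro lin_FF) auto
    moreover have "eqN N (\<Prod>k<K. (1 + (-1) * fps_X ^ (6 * k + 1))) (F (R 6 1))"
      unfolding F_def R_def using NK by (intro lin_FF) auto
    ultimately show ?thesis by (simp add: eqN_mult)
  qed
  have A2: "eqN N (qp (fps_X ^ (2 * 6)) K * (\<Prod>k<K. (1 + fps_const 1 * fps_X ^ (6 * (2 * k + 1) + 3)) * (1 + fps_const 1 * fps_X ^ (6 * (2 * k + 1) - 3))))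
     (F (R 12 0) * (G (R 12 9) * G (R 12 3)))"
  proof -
    have "(\<Prod>k<K. (1 + fps_const 1 * (fps_X :: int fps) ^ (6 * (2 * k + 1) + 3)) * (1 + fps_const 1 * fps_X ^ (6 * (2 * k + 1) - 3)))
        = (\<Prod>k<K. (1 + 1 * fps_X ^ (12 * k + 9))) * (\<Prod>k<K. (1 + 1 * fps_X ^ (12 * k + 3)))"
      unfolding prod.distrib[symmetric]
      by (intro prod.cong refl) (simp add: algebra_simps fc_m1 del: fps_const_neg)
    moreover have "eqN N (qp (fps_X ^ (2 * 6)) K) (F (R 12 0))"
      unfolding F_def R_def using qp_FF[of 12 N K] NK by simp
    moreover have "eqN N (\<Prod>k<K. (1 + 1 * fps_X ^ (12 * k + 9))) (G (R 12 9))"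
      unfolding G_def R_def using NK by (intro lin_FF) auto
    moreover have "eqN N (\<Prod>k<K. (1 + 1 * fps_X ^ (12 * k + 3))) (G (R 12 3))"
      unfolding G_def R_def using NK by (intro lin_FF) auto
    ultimately show ?thesis by (simp add: eqN_mult)
  qed
  have Od: "(\<Prod>k\<in>{k. odd k \<and> k \<le> N}. (1 - fps_X ^ k)) = F (R 6 1) * F (R 6 3) * F (R 6 5)"
  proof -
    have "(\<Prod>k\<in>{k. odd k \<and> k \<le> N}. (1 - fps_X ^ k)) = F (R 2 1)"
      unfolding F_def FF_def R_def odd_RR[symmetric] by simp
    also have "\<dots> = F (R 6 1 \<union> R 6 3 \<union> R 6 5)" unfolding R_def RR_eq_test3 ..
    also have "\<dots> = F (R 6 1) * F (R 6 3) * F (R 6 5)"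
      unfolding F_def R_def by (subst FF_union, simp, simp, (auto simp: RR_def)[1])+ simp
    finally show ?thesis .
  qed
  have G3: "G (R 12 9) * G (R 12 3) = G (R 6 3)"
    unfolding G_def R_def RR_eq_test1[symmetric] by (subst FF_union) (auto simp: RR_def)
  have F0: "F (R 12 0) * F (R 12 6) = F (R 6 0)"
    unfolding F_def R_def RR_eq_test2[symmetric] by (subst FF_union) (auto simp: RR_def)
  have D: "eqN N (G (R 6 3) * F (R 6 3)) (F (R 12 6))"
    unfolding G_def F_def FF_double R_def by (rule FF_trunc_eq) (simp_all add: RR_dbl)
  have "eqN N (F (R 12 0) * (G (R 12 9) * G (R 12 3)) * (F (R 6 1) * F (R 6 3) * F (R 6 5)))
     (F (R 12 0) * (G (R 6 3) * F (R 6 3)) * (F (R 6 1) * F (R 6 5)))"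
    unfolding G3 by (simp add: ac_simps)
  also have "eqN N \<dots> (F (R 12 0) * F (R 12 6) * (F (R 6 1) * F (R 6 5)))"
    by (intro eqN_mult eqN_refl D)
  also have "\<dots> = F (R 6 0) * (F (R 6 5) * F (R 6 1))" unfolding F0 by (simp add: ac_simps)
  finally have key: "eqN N (F (R 12 0) * (G (R 12 9) * G (R 12 3)) * (F (R 6 1) * F (R 6 3) * F (R 6 5)))
                        (F (R 6 0) * (F (R 6 5) * F (R 6 1)))" .
  have "eqN N (qp (fps_X ^ (2 * 6)) K * (\<Prod>k<K. (1 + fps_const 1 * fps_X ^ (6 * (2 * k + 1) + 3)) * (1 + fps_const 1 * fps_X ^ (6 * (2 * k + 1) - 3)))
      * (F (R 6 1) * F (R 6 3) * F (R 6 5)))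
     (F (R 12 0) * (G (R 12 9) * G (R 12 3)) * (F (R 6 1) * F (R 6 3) * F (R 6 5)))"
    by (rule eqN_mult[OF A2 eqN_refl])
  also note key
  also note eqN_sym[OF A1]
  finally show ?thesis unfolding Od by (rule eqN_sym)
qed

lemma PO_coef: "fps_nth (fps_X ^ e * PO) N = int (p_o (int N - int e))"
proof (cases "N < e")
  case True thus ?thesis by (simp add: fps_X_power_mult_nth p_o_def)
next
  case False
  hence "int N - int e = int (N - e)" by simp
  thus ?thesis using False by (simp add: fps_X_power_mult_nth PO_def)
qed

lemma PO_Cgf: "eqN N PO (Cgf {k. odd k \<and> k \<le> N})"
  unfolding eqN_def PO_def Cgf_def using p_o_cnt by simp

lemma sum_ind:
  assumes "finite A" "inj_on u A"
  shows "(\<Sum>j\<in>A. (if N = u j then 1 else 0) :: int) = (if \<exists>j\<in>A. N = u j then 1 else 0)"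
proof (cases "\<exists>j\<in>A. N = u j")
  case True
  then obtain j0 where j0: "j0 \<in> A" "N = u j0" by blast
  have "(\<Sum>j\<in>A. (if N = u j then 1 else 0) :: int) = (\<Sum>j\<in>{j0}. (if N = u j then 1 else 0))"
  proof (rule sum.mono_neutral_right)
    show "\<forall>j\<in>A - {j0}. (if N = u j then 1 else 0) = (0::int)"
      using j0 assms(2) by (auto simp: inj_on_def)
  qed (use assms j0 in auto)
  thus ?thesis using True j0 by simp
next
  case False thus ?thesis by (auto intro: sum.neutral)
qed

lemma u_inj: "inj_on (\<lambda>j::nat. 6 * j^2 + 3 * j) A"
proof -
  have "strict_mono (\<lambda>j::nat. 6 * j^2 + 3 * j)"
    by (rule strict_monoI) (intro add_strict_mono mult_strict_left_mono power_strict_mono; simp)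
  thus ?thesis by (meson strict_mono_imp_inj_on)
qed

lemma v_int: "int (6 * j^2 - 3 * j) = 6 * int j ^ 2 - 3 * int j"
proof -
  have "3 * j \<le> 6 * j^2" by (cases j) (auto simp: power2_eq_square)
  thus ?thesis by (simp add: of_nat_diff)
qed

lemma v_inj: "inj_on (\<lambda>j::nat. 6 * j^2 - 3 * j) {1..K}"
proof (rule inj_onI)
  fix j k :: nat assume jk: "j \<in> {1..K}" "k \<in> {1..K}" "6 * j^2 - 3 * j = 6 * k^2 - 3 * k"
  hence "int (6 * j^2 - 3 * j) = int (6 * k^2 - 3 * k)" by simp
  hence "6 * int j ^ 2 - 3 * int j = 6 * int k ^ 2 - 3 * int k" by (simp only: v_int)
  hence "3 * (int j - int k) * (2 * int j + 2 * int k - 1) = 0" by (simp add: algebra_simps power2_eq_square)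
  moreover have "2 * int j + 2 * int k - 1 \<noteq> 0" using jk by auto
  ultimately show "j = k" by simp
qed

lemma uv_ne: "j \<ge> 1 \<Longrightarrow> 6 * j^2 + 3 * j \<noteq> 6 * k^2 - 3 * (k::nat)"
proof
  assume "j \<ge> 1" "6 * j^2 + 3 * j = 6 * k^2 - 3 * k"
  hence "int (6 * j^2 + 3 * j) = int (6 * k^2 - 3 * k)" by simp
  hence "6 * int j ^ 2 + 3 * int j = 6 * int k ^ 2 - 3 * int k" by (simp only: v_int) simp
  hence "3 * (int j + int k) * (2 * int j - 2 * int k + 1) = 0" by (simp add: algebra_simps power2_eq_square)
  moreover have "2 * int j - 2 * int k + 1 \<noteq> 0" by presburger
  moreover have "int j + int k \<noteq> 0" using \<open>j \<ge> 1\<close> by simp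
  ultimately show False by simp
qed

lemma tri_char:
  fixes N K :: nat
  assumes "N < K"
  shows "(\<exists>t. triangular t \<and> N = 3 * t) \<longleftrightarrow>
         (N = 0 \<or> (\<exists>j\<in>{1..K}. N = 6 * j^2 + 3 * j) \<or> (\<exists>j\<in>{1..K}. N = 6 * j^2 - 3 * j))"
proof
  assume "\<exists>t. triangular t \<and> N = 3 * t"
  then obtain k where N: "N = 3 * (k * (k + 1) div 2)" by (auto simp: triangular_def)
  show "N = 0 \<or> (\<exists>j\<in>{1..K}. N = 6 * j^2 + 3 * j) \<or> (\<exists>j\<in>{1..K}. N = 6 * j^2 - 3 * j)"
  proof (cases "even k")
    case True
    then obtain j where k: "k = 2 * j" by blast
    have "k * (k + 1) = 2 * (j * (2 * j + 1))" using k by (simp add: algebra_simps)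
    hence "N = 6 * j^2 + 3 * j" using N by (simp add: power2_eq_square algebra_simps)
    moreover have "j \<le> 6 * j^2 + 3 * j" by simp
    ultimately show ?thesis using assms by (cases "j = 0") auto
  next
    case False
    then obtain i where k: "k = 2 * i + 1" using oddE by blast
    have "k * (k + 1) = 2 * ((i + 1) * (2 * i + 1))" using k by (simp add: algebra_simps)
    hence "N = 3 * ((i + 1) * (2 * i + 1))" using N by simp
    moreover have "3 * ((i + 1) * (2 * i + 1)) = 6 * (i + 1)^2 - 3 * (i + 1)"
      by (simp add: power2_eq_square algebra_simps)
    ultimately have "N = 6 * (i + 1)^2 - 3 * (i + 1)" by simp
    moreover have "i + 1 \<le> N" using \<open>N = 3 * ((i + 1) * (2 * i + 1))\<close> by simp
    ultimately show ?thesis using assms by (intro disjI2) (auto intro!: bexI[of _ "i + 1"])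
  qed
next
  assume "N = 0 \<or> (\<exists>j\<in>{1..K}. N = 6 * j^2 + 3 * j) \<or> (\<exists>j\<in>{1..K}. N = 6 * j^2 - 3 * j)"
  thus "\<exists>t. triangular t \<and> N = 3 * t"
  proof (elim disjE bexE)
    assume "N = 0"
    moreover have "triangular 0" unfolding triangular_def by (rule exI[of _ 0]) simp
    ultimately show ?thesis by auto
  next
    fix j assume j: "N = 6 * j^2 + 3 * j"
    have "triangular (j * (2 * j + 1))" unfolding triangular_def
      by (intro exI[of _ "2 * j"]) (simp add: algebra_simps)
    thus ?thesis using j by (intro exI[of _ "j * (2 * j + 1)"]) (simp add: power2_eq_square algebra_simps)
  next
    fix j assume "j \<in> {1..K}" and j: "N = 6 * j^2 - 3 * j"
    then obtain i where i: "j = i + 1" by (metis add.commute atLeastAtMost_iff le_Suc_ex plus_1_eq_Suc)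
    have "triangular ((i + 1) * (2 * i + 1))" unfolding triangular_def
      by (intro exI[of _ "2 * i + 1"]) (simp add: algebra_simps)
    moreover have "N = 3 * ((i + 1) * (2 * i + 1))" using j i
      by (simp add: power2_eq_square algebra_simps)
    ultimately show ?thesis by blast
  qed
qed

theorem theorem6:
  fixes n :: nat
  shows "int (p_o (int n))
         + (\<Sum>j\<in>{1..n}. (-1) ^ j * (int (p_o (int n - int j * (3 * int j - 2)))
                                   + int (p_o (int n - int j * (3 * int j + 2)))))
         = (if \<exists>t. triangular t \<and> n = 3 * t then 1 else 0)"
proof -
  define K where "K = 2 * n + 1"
  define Th1 :: "int fps" where "Th1 = 1 + (\<Sum>j\<in>{1..K}. fps_const (-1) ^ j * (fps_X ^ (3 * j^2 + 2 * j) + fps_X ^ (3 * j^2 - 2 * j)))"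
  define Th2 :: "int fps" where "Th2 = 1 + (\<Sum>j\<in>{1..K}. fps_const 1 ^ j * (fps_X ^ (6 * j^2 + 3 * j) + fps_X ^ (6 * j^2 - 3 * j)))"
  define A1 :: "int fps" where "A1 = qp (fps_X ^ (2 * 3)) K * (\<Prod>k<K. (1 + fps_const (-1) * fps_X ^ (3 * (2 * k + 1) + 2)) * (1 + fps_const (-1) * fps_X ^ (3 * (2 * k + 1) - 2)))"
  define A2 :: "int fps" where "A2 = qp (fps_X ^ (2 * 6)) K * (\<Prod>k<K. (1 + fps_const 1 * fps_X ^ (6 * (2 * k + 1) + 3)) * (1 + fps_const 1 * fps_X ^ (6 * (2 * k + 1) - 3)))"
  define T where "T = {k. odd k \<and> k \<le> n}"
  define Odd :: "int fps" where "Odd = (\<Prod>k\<in>T. (1 - fps_X ^ k))"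
  have J1: "eqN n A1 Th1" using jtp_trunc[of 2 3 "-1" n] unfolding A1_def Th1_def K_def by simp
  have J2: "eqN n A2 Th2" using jtp_trunc[of 3 6 1 n] unfolding A2_def Th2_def K_def by simp
  have P: "eqN n A1 (A2 * Odd)" using prod_ident[of n] unfolding A1_def A2_def Odd_def T_def K_def by simp
  have C: "Cgf T * Odd = 1" unfolding Odd_def by (rule Cgf_prod) (auto simp: T_def)
  have "eqN n (Th1 * PO) (A1 * PO)" by (intro eqN_mult eqN_refl eqN_sym[OF J1])
  also have "eqN n \<dots> (A2 * Odd * PO)" by (intro eqN_mult eqN_refl P)
  also have "eqN n \<dots> (A2 * Odd * Cgf T)" unfolding T_def by (intro eqN_mult eqN_refl PO_Cgf)
  also have "A2 * Odd * Cgf T = A2" using C by (simp add: ac_simps)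
  also note J2
  finally have "fps_nth (Th1 * PO) n = fps_nth Th2 n" by (simp add: eqN_def)
  moreover have "fps_nth (Th1 * PO) n = int (p_o (int n))
         + (\<Sum>j\<in>{1..n}. (-1) ^ j * (int (p_o (int n - int j * (3 * int j - 2)))
                                   + int (p_o (int n - int j * (3 * int j + 2)))))"
  proof -
    have "Th1 * PO = PO + (\<Sum>j\<in>{1..K}. fps_const ((-1) ^ j) * (fps_X ^ (3 * j^2 + 2 * j) * PO + fps_X ^ (3 * j^2 - 2 * j) * PO))"
      unfolding Th1_def by (simp add: algebra_simps sum_distrib_right sum_distrib_left)
    hence "fps_nth (Th1 * PO) n = int (p_o (int n)) + (\<Sum>j\<in>{1..K}. (-1) ^ j * (int (p_o (int n - int (3 * j^2 + 2 * j))) + int (p_o (int n - int (3 * j^2 - 2 * j)))))"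
      by (simp add: fps_sum_nth PO_coef) (simp add: PO_def)
    also have "(\<Sum>j\<in>{1..K}. (-1) ^ j * (int (p_o (int n - int (3 * j^2 + 2 * j))) + int (p_o (int n - int (3 * j^2 - 2 * j)))))
        = (\<Sum>j\<in>{1..n}. (-1) ^ j * (int (p_o (int n - int (3 * j^2 + 2 * j))) + int (p_o (int n - int (3 * j^2 - 2 * j)))))"
    proof (rule sum.mono_neutral_right)
      show "\<forall>j\<in>{1..K} - {1..n}. (-1) ^ j * (int (p_o (int n - int (3 * j^2 + 2 * j))) + int (p_o (int n - int (3 * j^2 - 2 * j)))) = 0"
      proof
        fix j assume "j \<in> {1..K} - {1..n}"
        hence jn: "n < j" by auto
        have "j \<le> 3 * j^2 - 2 * j" by (cases j) (auto simp: power2_eq_square)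
        hence h1: "int n - int (3 * j^2 - 2 * j) < 0" and h2: "int n - int (3 * j^2 + 2 * j) < 0" using jn by linarith+
        have pn: "p_o m = 0" if "m < 0" for m using that by (simp add: p_o_def)
        show "(-1) ^ j * (int (p_o (int n - int (3 * j^2 + 2 * j))) + int (p_o (int n - int (3 * j^2 - 2 * j)))) = 0"
          by (simp only: pn[OF h1] pn[OF h2]) simp
      qed
    qed (auto simp: K_def)
    also have "\<dots> = (\<Sum>j\<in>{1..n}. (-1) ^ j * (int (p_o (int n - int j * (3 * int j - 2)))
                                   + int (p_o (int n - int j * (3 * int j + 2)))))"
    proof (intro sum.cong refl)
      fix j :: nat
      have "2 * j \<le> 3 * j^2" by (cases j) (auto simp: power2_eq_square)
      hence "int (3 * j^2 - 2 * j) = int j * (3 * int j - 2)" by (simp add: of_nat_diff power2_eq_square algebra_simps)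
      moreover have "int (3 * j^2 + 2 * j) = int j * (3 * int j + 2)" by (simp add: power2_eq_square algebra_simps)
      ultimately show "(-1) ^ j * (int (p_o (int n - int (3 * j^2 + 2 * j))) + int (p_o (int n - int (3 * j^2 - 2 * j))))
          = (-1) ^ j * (int (p_o (int n - int j * (3 * int j - 2))) + int (p_o (int n - int j * (3 * int j + 2))))"
        by simp
    qed
    finally show ?thesis .
  qed
  moreover have "fps_nth Th2 n = (if \<exists>t. triangular t \<and> n = 3 * t then 1 else 0)"
  proof -
    have "fps_nth Th2 n = (if n = 0 then 1 else 0) + ((\<Sum>j\<in>{1..K}. (if n = 6 * j^2 + 3 * j then 1 else 0))
                                               + (\<Sum>j\<in>{1..K}. (if n = 6 * j^2 - 3 * j then 1 else 0)))"
      unfolding Th2_def by (simp add: fps_sum_nth sum.distrib)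
    also have "\<dots> = (if n = 0 then 1 else 0) + ((if \<exists>j\<in>{1..K}. n = 6 * j^2 + 3 * j then 1 else 0)
                                               + (if \<exists>j\<in>{1..K}. n = 6 * j^2 - 3 * j then 1 else 0))"
      by (simp only: sum_ind[OF _ u_inj] sum_ind[OF _ v_inj] finite_atLeastAtMost)
    also have "\<dots> = (if n = 0 \<or> (\<exists>j\<in>{1..K}. n = 6 * j^2 + 3 * j) \<or> (\<exists>j\<in>{1..K}. n = 6 * j^2 - 3 * j) then 1 else 0)"
    proof -
      have a: "\<not> (n = 0 \<and> (\<exists>j\<in>{1..K}. n = 6 * j^2 + 3 * j))" by auto
      have b: "\<not> (n = 0 \<and> (\<exists>j\<in>{1..K}. n = 6 * j^2 - 3 * j))"
      proof
        assume "n = 0 \<and> (\<exists>j\<in>{1..K}. n = 6 * j^2 - 3 * j)"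
        then obtain j :: nat where "j \<ge> 1" "0 = 6 * j^2 - 3 * j" by auto
        moreover have "3 * j < 6 * j^2" using \<open>j \<ge> 1\<close> by (cases j) (auto simp: power2_eq_square)
        ultimately show False by simp
      qed
      have c: "\<not> ((\<exists>j\<in>{1..K}. n = 6 * j^2 + 3 * j) \<and> (\<exists>j\<in>{1..K}. n = 6 * j^2 - 3 * j))"
        using uv_ne by fastforce
      show ?thesis using a b c by auto
    qed
    also have "\<dots> = (if \<exists>t. triangular t \<and> n = 3 * t then 1 else 0)"
      using tri_char[of n K] by (simp add: K_def)
    finally show ?thesis .
  qed
  ultimately show ?thesis by simp
qed

end
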